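(* Let $V$ be a finite-dimensional vector space over $\mathbb{F}_q$. A metric $d$ on $V$ is a projective metric if and only if it is integral, (integrally) convex, scale-invariant and translation-invariant.
   Context: For a set $\mathcal{F}\subset V$ of pairwise linearly independent (in particular nonzero) vectors, the projective weight is $\operatorname{wt}_{\mathcal{F}}(x)=\min(\{|I|: I\subseteq\mathcal{F},\ x\in\langle I\rangle\}\cup\{\infty\})$ (with $\langle\emptyset\rangle=\{0\}$), and $d_{\mathcal{F}}(x,y)=\operatorname{wt}_{\mathcal{F}}(y-x)$; a metric is projective if it equals $d_{\mathcal{F}}$ for some such $\mathcal{F}$. A metric $d:V\times V\to\mathbb{R}\cup\{\infty\}$ is integral if it takes values in $\mathbb{N}\cup\{\infty\}$; scale-invariant if $d(\alpha x,\alpha y)=d(x,y)$ for all nonzero $\alpha\in\mathbb{F}_q$; translation-invariant if $d(x+z,y+z)=d(x,y)$. An integral metric is convex if for all $v_1,v_2$ with $d(v_1,v_2)<\infty$ and all $i\in\{0,\dots,d(v_1,v_2)\}$ there is $x\in V$ with $d(v_1,x)=i$ and $d(x,v_2)=d(v_1,v_2)-i$. *)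

theory Defs
  imports Main "HOL-Library.Extended_Real"
begin

text \<open>A vector space V over a field is given by a scalar multiplication
  scale satisfying the library locale vector_space; V is the type 'v.\<close>

definition is_metric :: "('v \<Rightarrow> 'v \<Rightarrow> ereal) \<Rightarrow> bool" where
  "is_metric d \<longleftrightarrow>
     (\<forall>x y. 0 \<le> d x y) \<and>
     (\<forall>x y. d x y = 0 \<longleftrightarrow> x = y) \<and>
     (\<forall>x y. d x y = d y x) \<and>
     (\<forall>x y z. d x z \<le> d x y + d y z)"

definition pairwise_lin_indep :: "('a::field \<Rightarrow> 'v::ab_group_add \<Rightarrow> 'v) \<Rightarrow> 'v set \<Rightarrow> bool" where
  "pairwise_lin_indep scale F \<longleftrightarrow>
     (\<forall>u\<in>F. u \<noteq> 0) \<and>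
     (\<forall>u\<in>F. \<forall>w\<in>F. u \<noteq> w \<longrightarrow> \<not> module.dependent scale {u, w})"

text \<open>Projective weight: min of card I over I subset of F with x in span I,
  together with infinity (Inf of the empty set of ereals is infinity).\<close>
definition proj_wt :: "('a::field \<Rightarrow> 'v::ab_group_add \<Rightarrow> 'v) \<Rightarrow> 'v set \<Rightarrow> 'v \<Rightarrow> ereal" where
  "proj_wt scale F x =
     Inf ((\<lambda>I. ereal (real (card I))) ` {I. I \<subseteq> F \<and> finite I \<and> x \<in> module.span scale I})"

definition proj_dist :: "('a::field \<Rightarrow> 'v::ab_group_add \<Rightarrow> 'v) \<Rightarrow> 'v set \<Rightarrow> 'v \<Rightarrow> 'v \<Rightarrow> ereal" where
  "proj_dist scale F x y = proj_wt scale F (y - x)"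

definition projective_metric :: "('a::field \<Rightarrow> 'v::ab_group_add \<Rightarrow> 'v) \<Rightarrow> ('v \<Rightarrow> 'v \<Rightarrow> ereal) \<Rightarrow> bool" where
  "projective_metric scale d \<longleftrightarrow>
     (\<exists>F. pairwise_lin_indep scale F \<and> d = proj_dist scale F)"

definition integral_metric :: "('v \<Rightarrow> 'v \<Rightarrow> ereal) \<Rightarrow> bool" where
  "integral_metric d \<longleftrightarrow> (\<forall>x y. d x y = \<infinity> \<or> (\<exists>n::nat. d x y = ereal (real n)))"

definition scale_invariant :: "('a::field \<Rightarrow> 'v \<Rightarrow> 'v) \<Rightarrow> ('v \<Rightarrow> 'v \<Rightarrow> ereal) \<Rightarrow> bool" where
  "scale_invariant scale d \<longleftrightarrow> (\<forall>\<alpha> x y. \<alpha> \<noteq> 0 \<longrightarrow> d (scale \<alpha> x) (scale \<alpha> y) = d x y)"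

definition translation_invariant :: "('v::plus \<Rightarrow> 'v \<Rightarrow> ereal) \<Rightarrow> bool" where
  "translation_invariant d \<longleftrightarrow> (\<forall>x y z. d (x + z) (y + z) = d x y)"

definition convex_metric :: "('v \<Rightarrow> 'v \<Rightarrow> ereal) \<Rightarrow> bool" where
  "convex_metric d \<longleftrightarrow>
     (\<forall>v1 v2 (n::nat). d v1 v2 = ereal (real n) \<longrightarrow>
        (\<forall>i\<le>n. \<exists>x. d v1 x = ereal (real i) \<and> d x v2 = ereal (real (n - i))))"

end

theory Submission
  imports Defs
begin

context vector_space
begin

lemma pw_le: "I \<subseteq> F \<Longrightarrow> finite I \<Longrightarrow> x \<in> span I \<Longrightarrow> proj_wt scale F x \<le> ereal (real (card I))"
  unfolding proj_wt_def by (rule Inf_lower) auto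

lemma pw_ge: "(\<And>I. I \<subseteq> F \<Longrightarrow> finite I \<Longrightarrow> x \<in> span I \<Longrightarrow> a \<le> ereal (real (card I))) \<Longrightarrow> a \<le> proj_wt scale F x"
  unfolding proj_wt_def by (rule Inf_greatest) auto

lemma pw_cases: "proj_wt scale F x = \<infinity> \<or>
   (\<exists>I. I \<subseteq> F \<and> finite I \<and> x \<in> span I \<and> proj_wt scale F x = ereal (real (card I)))"
proof (cases "\<exists>I. I \<subseteq> F \<and> finite I \<and> x \<in> span I")
  case False
  then have e: "{I. I \<subseteq> F \<and> finite I \<and> x \<in> span I} = {}" by auto
  have "proj_wt scale F x = \<infinity>" unfolding proj_wt_def e by (simp add: top_ereal_def)
  then show ?thesis by simp
next
  case True
  define n where "n = (LEAST n. \<exists>I. I \<subseteq> F \<and> finite I \<and> x \<in> span I \<and> card I = n)"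
  have "\<exists>I. I \<subseteq> F \<and> finite I \<and> x \<in> span I \<and> card I = n"
    unfolding n_def by (rule LeastI_ex) (use True in auto)
  then obtain I where I: "I \<subseteq> F" "finite I" "x \<in> span I" "card I = n" by blast
  have "proj_wt scale F x \<le> ereal (real (card I))" using I by (intro pw_le)
  moreover have "ereal (real (card I)) \<le> proj_wt scale F x"
  proof (rule pw_ge)
    fix J assume "J \<subseteq> F" "finite J" "x \<in> span J"
    then have "n \<le> card J" unfolding n_def by (intro Least_le) auto
    then show "ereal (real (card I)) \<le> ereal (real (card J))" using I by simp
  qed
  ultimately show ?thesis using I by (intro disjI2 exI[of _ I]) auto
qed

lemma pw_scale: "proj_wt scale F (scale c x) \<le> proj_wt scale F x"
  unfolding proj_wt_def by (rule Inf_superset_mono) (auto intro: span_scale)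

lemma pw_scale_eq: "c \<noteq> 0 \<Longrightarrow> proj_wt scale F (scale c x) = proj_wt scale F x"
  using pw_scale[of F c x] pw_scale[of F "inverse c" "scale c x"] by simp

lemma ereal_squeeze:
  fixes a b :: ereal and x y :: real
  assumes "0 \<le> a" "0 \<le> b" "a \<le> ereal x" "b \<le> ereal y" "ereal (x + y) \<le> a + b"
  shows "a = ereal x \<and> b = ereal y"
  using assms by (cases a; cases b) auto

lemma forward:
  assumes m: "is_metric (proj_dist scale F)"
  shows "integral_metric (proj_dist scale F) \<and> convex_metric (proj_dist scale F)
     \<and> scale_invariant scale (proj_dist scale F) \<and> translation_invariant (proj_dist scale F)"
proof (intro conjI)
  show "integral_metric (proj_dist scale F)"
    unfolding integral_metric_def proj_dist_def using pw_cases by blast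
  show "translation_invariant (proj_dist scale F)"
    unfolding translation_invariant_def proj_dist_def by simp
  show "scale_invariant scale (proj_dist scale F)"
    unfolding scale_invariant_def proj_dist_def
    by (auto simp: scale_right_diff_distrib[symmetric] pw_scale_eq)
  show "convex_metric (proj_dist scale F)"
    unfolding convex_metric_def
  proof (intro allI impI)
    fix v1 v2 n i assume h: "proj_dist scale F v1 v2 = ereal (real n)" and i: "i \<le> n"
    from pw_cases[of F "v2 - v1"] h obtain I where I: "I \<subseteq> F" "finite I" "v2 - v1 \<in> span I"
      "card I = n" unfolding proj_dist_def by auto
    from span_finite[OF I(2)] I(3) obtain u where u: "v2 - v1 = (\<Sum>v\<in>I. scale (u v) v)" by auto
    from i I(4) obtain J where J: "J \<subseteq> I" "card J = i" "finite J"
      by (metis obtain_subset_with_card_n)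
    define z where "z = v1 + (\<Sum>v\<in>J. scale (u v) v)"
    have "z - v1 \<in> span J" unfolding z_def by simp (rule span_sum, auto intro: span_scale span_base)
    then have a: "proj_dist scale F v1 z \<le> ereal (real i)"
      unfolding proj_dist_def using J I by (metis pw_le order_trans)
    have "v2 - z = (\<Sum>v\<in>I - J. scale (u v) v)"
      using u sum.subset_diff[OF J(1) I(2), of "\<lambda>v. scale (u v) v"] unfolding z_def
      by (simp add: algebra_simps)
    then have "v2 - z \<in> span (I - J)" by simp (rule span_sum, auto intro: span_scale span_base)
    then have b: "proj_dist scale F z v2 \<le> ereal (real (n - i))"
      unfolding proj_dist_def using J I
      by (metis pw_le card_Diff_subset Diff_subset finite_Diff order_trans)
    have c: "ereal (real i + real (n - i)) \<le> proj_dist scale F v1 z + proj_dist scale F z v2"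
      using m h i unfolding is_metric_def by (metis of_nat_add le_add_diff_inverse)
    have "0 \<le> proj_dist scale F v1 z" "0 \<le> proj_dist scale F z v2"
      using m unfolding is_metric_def by auto
    then show "\<exists>x. proj_dist scale F v1 x = ereal (real i) \<and> proj_dist scale F x v2 = ereal (real (n - i))"
      using ereal_squeeze[OF _ _ a b c] by blast
  qed
qed

lemma reverse:
  assumes m: "is_metric d" and it: "integral_metric d" and cv: "convex_metric d"
    and si: "scale_invariant scale d" and ti: "translation_invariant d"
  shows "\<exists>F. pairwise_lin_indep scale F \<and> d = proj_dist scale F"
proof -
  define W where "W = {x. d 0 x = 1}"
  define line where "line x = {scale c x | c. c \<noteq> 0}" for x
  define r where "r x = (SOME y. y \<in> line x)" for x
  define F where "F = r ` W"
  have d0: "d x y = 0 \<longleftrightarrow> x = y" "0 \<le> d x y" "d x z \<le> d x y + d y z" for x y z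
    using m unfolding is_metric_def by auto
  have dz: "d v v = 0" for v using d0(1) by blast
  have tr: "d x y = d 0 (y - x)" for x y
  proof -
    have "d (x + - x) (y + - x) = d x y" using ti unfolding translation_invariant_def by blast
    then show ?thesis by simp
  qed
  have sc: "c \<noteq> 0 \<Longrightarrow> d 0 (scale c x) = d 0 x" for c x
  proof -
    assume "c \<noteq> 0"
    then have "d (scale c 0) (scale c x) = d 0 x" using si unfolding scale_invariant_def by blast
    then show ?thesis by simp
  qed
  have line_self: "x \<in> line x" for x unfolding line_def by (rule CollectI, rule exI[of _ 1]) simp
  have r_in: "r x \<in> line x" for x unfolding r_def using line_self by (rule someI)
  have line_eq: "line y = line x" if "y \<in> line x" for x y
  proof -
    from that obtain c where c: "c \<noteq> 0" "y = scale c x" unfolding line_def by auto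
    show ?thesis
    proof
      show "line y \<subseteq> line x" unfolding line_def using c by auto
      show "line x \<subseteq> line y" unfolding line_def
      proof
        fix z assume "z \<in> {scale e x |e. e \<noteq> 0}"
        then obtain e where e: "e \<noteq> 0" "z = scale e x" by auto
        then have "z = scale (e / c) y" using c by simp
        moreover have "e / c \<noteq> 0" using e c by simp
        ultimately show "z \<in> {scale e y |e. e \<noteq> 0}" by blast
      qed
    qed
  qed
  have F1: "d 0 f = 1" if "f \<in> F" for f
  proof -
    from that obtain x where x: "x \<in> W" "f = r x" unfolding F_def by auto
    from r_in[of x] obtain c where "c \<noteq> 0" "r x = scale c x" unfolding line_def by auto
    then show ?thesis using x sc unfolding W_def by simp
  qed
  have WF: "r x \<in> F \<and> x \<in> span {r x}" if "x \<in> W" for x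
  proof -
    from r_in[of x] obtain c where c: "c \<noteq> 0" "r x = scale c x" unfolding line_def by auto
    then have "x = scale (inverse c) (r x)" by simp
    then have "x \<in> span {r x}" by (metis span_scale span_base singletonI)
    then show ?thesis using that unfolding F_def by auto
  qed
  have Fnz: "f \<noteq> 0" if "f \<in> F" for f using F1[OF that] dz[of 0] by auto
  have pli: "pairwise_lin_indep scale F"
    unfolding pairwise_lin_indep_def
  proof (intro conjI ballI impI)
    fix u assume "u \<in> F" then show "u \<noteq> 0" by (rule Fnz)
  next
    fix u w assume u: "u \<in> F" and w: "w \<in> F" and ne: "u \<noteq> w"
    have key: False if "a \<in> F" "b \<in> F" "a \<noteq> b" "a \<in> span {b}" for a b
    proof -
      from that(4) obtain k where k: "a = scale k b" by (auto simp: span_singleton)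
      with Fnz[OF that(1)] have "k \<noteq> 0" by auto
      with k have "a \<in> line b" unfolding line_def by auto
      then have lab: "line a = line b" by (rule line_eq)
      from that(1) obtain x where x: "a = r x" unfolding F_def by auto
      from that(2) obtain y where y: "b = r y" unfolding F_def by auto
      have "line a = line x" using line_eq[OF r_in[of x]] x by simp
      moreover have "line b = line y" using line_eq[OF r_in[of y]] y by simp
      ultimately have "line x = line y" using lab by simp
      then have "r x = r y" unfolding r_def by simp
      then show False using x y that(3) by simp
    qed
    show "\<not> dependent {u, w}"
    proof
      assume "dependent {u, w}"
      then obtain a where "a \<in> {u, w}" "a \<in> span ({u, w} - {a})" unfolding dependent_def by blast
      then have "u \<in> span {w} \<or> w \<in> span {u}" using ne by (auto simp: insert_Diff_if)
      then show False using key[OF u w ne] key[OF w u] ne by blast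
    qed
  qed
  have A: "d 0 x \<le> ereal (real (card I))" if "finite I" "I \<subseteq> F" "x \<in> span I" for I x
    using that
  proof (induction I arbitrary: x rule: finite_induct)
    case empty then show ?case using dz[of 0] by simp
  next
    case (insert f I)
    from insert.prems obtain k where k: "x - scale k f \<in> span I" by (auto simp: span_insert)
    have t: "d 0 x \<le> d 0 (scale k f) + d 0 (x - scale k f)"
      using d0(3)[where x=0 and y="scale k f" and z=x] tr[where x="scale k f" and y=x] by simp
    have h2: "d 0 (x - scale k f) \<le> ereal (real (card I))" using insert k by auto
    have fF: "f \<in> F" using insert.prems by simp
    have h1: "d 0 (scale k f) \<le> 1"
    proof (cases "k = 0")
      case True then show ?thesis using dz[of 0] by simp
    next
      case False then show ?thesis using sc[OF False, of f] F1[OF fF] by simp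
    qed
    have "d 0 x \<le> 1 + ereal (real (card I))" using t add_mono[OF h1 h2] by (rule order_trans)
    then show ?case using insert by (simp add: one_ereal_def)
  qed
  have B: "\<exists>I. I \<subseteq> F \<and> finite I \<and> card I \<le> n \<and> x \<in> span I" if "d 0 x = ereal (real n)" for n x
    using that
  proof (induction n arbitrary: x)
    case 0 then have "x = 0" using d0(1)[where x=0 and y=x] by (simp add: zero_ereal_def)
    then show ?case by (intro exI[of _ "{}"]) auto
  next
    case (Suc m)
    from cv[unfolded convex_metric_def, rule_format, OF Suc.prems, of m]
    obtain y where y: "d 0 y = ereal (real m)" "d y x = ereal (real (Suc m - m))"
      by auto
    from Suc.IH[OF y(1)] obtain I where I: "I \<subseteq> F" "finite I" "card I \<le> m" "y \<in> span I" by blast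
    have "d 0 (x - y) = 1" using y(2) tr[where x=y and y=x] by (simp add: one_ereal_def)
    then have "x - y \<in> W" unfolding W_def by simp
    from WF[OF this] have f: "r (x - y) \<in> F" "x - y \<in> span {r (x - y)}" by auto
    let ?I = "insert (r (x - y)) I"
    have "y \<in> span ?I" "x - y \<in> span ?I" using I(4) f(2) span_mono[of I ?I] span_mono[of "{r (x - y)}" ?I] by auto
    then have "y + (x - y) \<in> span ?I" by (rule span_add)
    moreover have "card ?I \<le> Suc m"
    proof -
      have "card ?I \<le> Suc (card I)" using I(2) by (simp add: card_insert_if)
      then show ?thesis using I(3) by linarith
    qed
    ultimately show ?case using I f by (intro exI[of _ ?I]) auto
  qed
  have eq: "d 0 v = proj_wt scale F v" for v
  proof (rule antisym)
    show "d 0 v \<le> proj_wt scale F v" by (rule pw_ge) (rule A)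
    show "proj_wt scale F v \<le> d 0 v"
    proof (cases "d 0 v = \<infinity>")
      case False
      with it obtain n where n: "d 0 v = ereal (real n)" unfolding integral_metric_def by blast
      from B[OF n] obtain I where "I \<subseteq> F" "finite I" "card I \<le> n" "v \<in> span I" by blast
      then have "proj_wt scale F v \<le> ereal (real (card I))" by (intro pw_le)
      also have "\<dots> \<le> d 0 v" using n \<open>card I \<le> n\<close> by simp
      finally show ?thesis .
    qed simp
  qed
  have "d x y = proj_dist scale F x y" for x y
    by (subst tr) (simp only: proj_dist_def eq)
  then have "d = proj_dist scale F" by (intro ext)
  with pli show ?thesis by blast
qed

end


theorem proposition3p2:
  fixes scale :: "'a::{field,finite} \<Rightarrow> 'v::ab_group_add \<Rightarrow> 'v"
    and d :: "'v \<Rightarrow> 'v \<Rightarrow> ereal"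
  assumes "vector_space scale"
    and "\<exists>B. finite_dimensional_vector_space scale B"
    and "is_metric d"
  shows "projective_metric scale d \<longleftrightarrow>
           integral_metric d \<and> convex_metric d \<and> scale_invariant scale d \<and> translation_invariant d"
proof
  assume "projective_metric scale d"
  then obtain F where "d = proj_dist scale F" unfolding projective_metric_def by blast
  then show "integral_metric d \<and> convex_metric d \<and> scale_invariant scale d \<and> translation_invariant d"
    using vector_space.forward[OF assms(1), of F] assms(3) by simp
next
  assume "integral_metric d \<and> convex_metric d \<and> scale_invariant scale d \<and> translation_invariant d"
  then show "projective_metric scale d"
    unfolding projective_metric_def using vector_space.reverse[OF assms(1) assms(3)] by blast
qed

end
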